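(* Let $\pi$ be a positive continuous probability density on $\mathbb{R}$ and $q:\mathbb{R}^2\to[0,\infty)$ a bounded continuous function with $q(x,\cdot)$ a probability density for each $x$ and, for some $s>0$, $q(x,x+u)=0$ whenever $|u|>s$. Let $a>0$. Then for every bounded continuous function $f:\mathbb{R}\to\mathbb{C}$, $$\|T_{a^c}f\|_{L^2(\pi)}\le\int_{-s}^{s}\Big[\int_{\{|x|>a\}}|f(x+u)|^2\,t(x,x+u)^2\,\pi(x)\,dx\Big]^{1/2}du\le\beta_a\|f\|_{L^2(\pi)},$$ where $\beta_a:=\int_{-s}^{s}\sup_{|x|>a}\sqrt{t(x,x+u)\,t(x+u,x)}\,du$.
   Context: $L^2(\pi)$ is the $L^2$ space of the probability measure $\pi(y)dy$. Set $t(x,y):=\min(q(x,y),\pi(y)q(y,x)/\pi(x))$, $(Tf)(x):=\int_{\mathbb{R}}f(y)t(x,y)\,dy$, and $T_{a^c}f:=1_{\mathbb{R}\setminus[-a,a]}\cdot Tf$. *)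

theory Defs
  imports "HOL-Analysis.Analysis"
begin

definition mh_t :: "(real \<Rightarrow> real) \<Rightarrow> (real \<Rightarrow> real \<Rightarrow> real) \<Rightarrow> real \<Rightarrow> real \<Rightarrow> real" where
  "mh_t \<pi> q x y = min (q x y) (\<pi> y * q y x / \<pi> x)"

definition T_op :: "(real \<Rightarrow> real) \<Rightarrow> (real \<Rightarrow> real \<Rightarrow> real) \<Rightarrow> (real \<Rightarrow> complex) \<Rightarrow> real \<Rightarrow> complex" where
  "T_op \<pi> q f x = (LINT y|lborel. f y * complex_of_real (mh_t \<pi> q x y))"

definition T_ac :: "real \<Rightarrow> (real \<Rightarrow> real) \<Rightarrow> (real \<Rightarrow> real \<Rightarrow> real) \<Rightarrow> (real \<Rightarrow> complex) \<Rightarrow> real \<Rightarrow> complex" where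
  "T_ac a \<pi> q f x = indicator (UNIV - {-a..a}) x * T_op \<pi> q f x"

definition L2_norm :: "(real \<Rightarrow> real) \<Rightarrow> (real \<Rightarrow> complex) \<Rightarrow> real" where
  "L2_norm \<pi> g = sqrt (LINT x|lborel. (cmod (g x))\<^sup>2 * \<pi> x)"

definition beta_a :: "real \<Rightarrow> real \<Rightarrow> (real \<Rightarrow> real) \<Rightarrow> (real \<Rightarrow> real \<Rightarrow> real) \<Rightarrow> real" where
  "beta_a a s \<pi> q = (LBINT u:{-s..s}. (SUP x\<in>{x. \<bar>x\<bar> > a}. sqrt (mh_t \<pi> q x (x + u) * mh_t \<pi> q (x + u) x)))"

end

theory Submission
  imports Defs
begin
lemma weighted_cs:
  fixes p a b :: "'a \<Rightarrow> real"
  assumes p: "\<And>x. 0 \<le> p x"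
    and ia: "integrable M (\<lambda>x. p x * (a x)\<^sup>2)"
    and ib: "integrable M (\<lambda>x. p x * (b x)\<^sup>2)"
    and iab: "integrable M (\<lambda>x. p x * a x * b x)"
  shows "(\<integral>x. p x * a x * b x \<partial>M) \<le> sqrt (\<integral>x. p x * (a x)\<^sup>2 \<partial>M) * sqrt (\<integral>x. p x * (b x)\<^sup>2 \<partial>M)"
proof -
  define A where "A = (\<integral>x. p x * (a x)\<^sup>2 \<partial>M)"
  define B where "B = (\<integral>x. p x * (b x)\<^sup>2 \<partial>M)"
  define C where "C = (\<integral>x. p x * a x * b x \<partial>M)"
  have A0: "A \<ge> 0" unfolding A_def by (intro integral_nonneg_AE) (auto intro!: mult_nonneg_nonneg p)
  have B0: "B \<ge> 0" unfolding B_def by (intro integral_nonneg_AE) (auto intro!: mult_nonneg_nonneg p)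
  have quad: "0 \<le> r\<^sup>2 * A - 2 * r * C + B" for r
  proof -
    have "0 \<le> (\<integral>x. p x * (r * a x - b x)\<^sup>2 \<partial>M)"
      by (intro integral_nonneg_AE) (auto intro!: mult_nonneg_nonneg p)
    also have "(\<lambda>x. p x * (r * a x - b x)\<^sup>2) = (\<lambda>x. r\<^sup>2 * (p x * (a x)\<^sup>2) - 2 * r * (p x * a x * b x) + p x * (b x)\<^sup>2)"
      by (rule ext) (simp add: power2_eq_square algebra_simps)
    also have "(\<integral>x. r\<^sup>2 * (p x * (a x)\<^sup>2) - 2 * r * (p x * a x * b x) + p x * (b x)\<^sup>2 \<partial>M) = r\<^sup>2 * A - 2 * r * C + B"
      using ia ib iab unfolding A_def B_def C_def by simp
    finally show ?thesis .
  qed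
  show ?thesis
  proof (cases "C \<le> 0")
    case True
    have "0 \<le> sqrt A * sqrt B" using A0 B0 by simp
    with True show ?thesis unfolding A_def[symmetric] B_def[symmetric] C_def[symmetric] by linarith
  next
    case False
    have Apos: "A > 0"
    proof (rule ccontr)
      assume "\<not> A > 0" then have "A = 0" using A0 by simp
      then have q0: "0 \<le> - 2 * r * C + B" for r using quad[of r] by simp
      have "0 \<le> - 2 * ((B + 1) / (2 * C)) * C + B" by (rule q0)
      moreover have "- 2 * ((B + 1) / (2 * C)) * C = -(B+1)" using False by (simp add: field_simps)
      ultimately show False by linarith
    qed
    have "0 \<le> (C/A)\<^sup>2 * A - 2 * (C/A) * C + B" by (rule quad)
    then have "C\<^sup>2 \<le> A * B" using Apos by (simp add: field_simps power2_eq_square)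
    then have "sqrt (C\<^sup>2) \<le> sqrt (A * B)" by (rule real_sqrt_le_mono)
    then show ?thesis using False unfolding A_def[symmetric] B_def[symmetric] C_def[symmetric] by (simp add: real_sqrt_mult)
  qed
qed

lemma bound_by_p_integrable:
  fixes p g :: "real \<Rightarrow> real"
  assumes "integrable lborel p" "g \<in> borel_measurable lborel" "\<And>x. \<bar>g x\<bar> \<le> K * p x"
  shows "integrable lborel g"
proof (rule Bochner_Integration.integrable_bound[where M=lborel and f="\<lambda>x. K * p x"])
  show "integrable lborel (\<lambda>x. K * p x)" using assms(1) by simp
  show "g \<in> borel_measurable lborel" by fact
  show "AE x in lborel. norm (g x) \<le> norm (K * p x)" using assms(3)
    by (auto intro!: AE_I2 order_trans[OF _ abs_ge_self])
qed

lemma minkowski_int: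
  fixes p :: "real \<Rightarrow> real" and h :: "real \<Rightarrow> real \<Rightarrow> real" and C c d :: real
  assumes p_nn: "\<And>x. 0 \<le> p x" and p_int: "integrable lborel p"
    and h_nn: "\<And>x u. 0 \<le> h x u" and h_bd: "\<And>x u. h x u \<le> C * indicator {c..d} u"
    and C0: "0 \<le> C"
    and h_meas: "(\<lambda>z. h (fst z) (snd z)) \<in> borel_measurable (lborel \<Otimes>\<^sub>M lborel)"
  shows "sqrt (\<integral>x. p x * (\<integral>u. h x u \<partial>lborel)\<^sup>2 \<partial>lborel)
     \<le> (\<integral>u. sqrt (\<integral>x. p x * (h x u)\<^sup>2 \<partial>lborel) \<partial>lborel)"
proof -
  have p_meas[measurable]: "p \<in> borel_measurable lborel" using borel_measurable_integrable[OF p_int] .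
  have hm[measurable (raw)]: "(\<lambda>z. h (f z) (g z)) \<in> borel_measurable M"
    if "f \<in> measurable M lborel" "g \<in> measurable M lborel" for M :: "'b measure" and f g
    using measurable_compose[OF measurable_Pair[OF that] h_meas] by simp
  have h_le_C: "h x u \<le> C" for x u
    using h_bd[of x u] C0 by (cases "u \<in> {c..d}") auto
  define L where "L = measure lborel {c..d}"
  have L0: "0 \<le> L" unfolding L_def by simp
  have ind_int0: "integrable lborel (indicator {c..d} :: real \<Rightarrow> real)"
    by (rule integrable_real_indicator) (auto simp: emeasure_lborel_Icc_eq)
  have ind_int: "integrable lborel (\<lambda>u. C * indicator {c..d} u :: real)" using ind_int0 by simp
  have hx_int: "integrable lborel (h x)" for x
    by (rule Bochner_Integration.integrable_bound[OF ind_int]) (use h_nn in \<open>auto intro!: AE_I2 order_trans[OF h_bd abs_ge_self]\<close>)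
  define F where "F x = (\<integral>u. h x u \<partial>lborel)" for x
  have F_nn: "0 \<le> F x" for x unfolding F_def by (intro integral_nonneg_AE) (auto intro: h_nn)
  have F_le: "F x \<le> C * L" for x
  proof -
    have "F x \<le> (\<integral>u. C * indicator {c..d} u \<partial>lborel)"
      unfolding F_def by (intro integral_mono hx_int ind_int h_bd)
    also have "\<dots> = C * L" by (simp add: L_def)
    finally show ?thesis .
  qed
  have F_meas[measurable]: "F \<in> borel_measurable lborel"
    unfolding F_def by measurable
  define P where "P = (\<integral>x. p x \<partial>lborel)"
  have P0: "0 \<le> P" unfolding P_def by (intro integral_nonneg_AE) (auto intro: p_nn)
  define N where "N = (\<integral>x. p x * (F x)\<^sup>2 \<partial>lborel)"
  have N0: "0 \<le> N" unfolding N_def by (intro integral_nonneg_AE AE_I2 mult_nonneg_nonneg p_nn) simp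
  define w where "w u = sqrt (\<integral>x. p x * (h x u)\<^sup>2 \<partial>lborel)" for u
  define W where "W = (\<integral>u. w u \<partial>lborel)"
  have w_nn: "0 \<le> w u" for u unfolding w_def
    by (intro real_sqrt_ge_zero integral_nonneg_AE AE_I2 mult_nonneg_nonneg p_nn) simp
  have W0: "0 \<le> W" unfolding W_def by (intro integral_nonneg_AE) (auto intro: w_nn)
  have hsq_int: "integrable lborel (\<lambda>x. p x * (h x u)\<^sup>2)" for u
  proof (rule bound_by_p_integrable[OF p_int, where K="C\<^sup>2"])
    show "(\<lambda>x. p x * (h x u)\<^sup>2) \<in> borel_measurable lborel" by measurable
    fix x
    have "(h x u)\<^sup>2 \<le> C\<^sup>2"
      using h_le_C[of x u] h_nn[of x u] by (intro power_mono) auto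
    then show "\<bar>p x * (h x u)\<^sup>2\<bar> \<le> C\<^sup>2 * p x"
      using p_nn[of x] by (simp add: abs_mult mult.commute mult_left_mono)
  qed
  have w_bd: "w u \<le> C * sqrt P * indicator {c..d} u" for u
  proof (cases "u \<in> {c..d}")
    case True
    have "(\<integral>x. p x * (h x u)\<^sup>2 \<partial>lborel) \<le> (\<integral>x. C\<^sup>2 * p x \<partial>lborel)"
    proof (intro integral_mono hsq_int)
      show "integrable lborel (\<lambda>x. C\<^sup>2 * p x)" using p_int by simp
      fix x
      have "(h x u)\<^sup>2 \<le> C\<^sup>2"
        using h_le_C[of x u] h_nn[of x u] by (intro power_mono) auto
      then show "p x * (h x u)\<^sup>2 \<le> C\<^sup>2 * p x"
        using p_nn[of x] by (simp add: mult.commute mult_left_mono)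
    qed
    also have "\<dots> = C\<^sup>2 * P" by (simp add: P_def)
    finally have "w u \<le> sqrt (C\<^sup>2 * P)" unfolding w_def by (rule real_sqrt_le_mono)
    then show ?thesis using True C0 by (simp add: real_sqrt_mult)
  next
    case False
    then have "h x u = 0" for x using h_bd[of x u] h_nn[of x u] by simp
    then show ?thesis using False unfolding w_def by simp
  qed
  have w_meas[measurable]: "w \<in> borel_measurable lborel"
    unfolding w_def by measurable
  have w_int: "integrable lborel w"
  proof (rule Bochner_Integration.integrable_bound[where M=lborel and f="\<lambda>u. (C * sqrt P) * indicator {c..d} u"])
    show "integrable lborel (\<lambda>u. (C * sqrt P) * indicator {c..d} u :: real)" using ind_int0 by simp
    show "AE x in lborel. norm (w x) \<le> norm ((C * sqrt P) * indicator {c..d} x :: real)"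
      using w_bd w_nn by (auto intro!: AE_I2 order_trans[OF _ abs_ge_self])
  qed simp
  define G where "G x u = p x * F x * h x u" for x u
  have G_int: "integrable (lborel \<Otimes>\<^sub>M lborel) (case_prod G)"
  proof (rule Bochner_Integration.integrable_bound[where f="\<lambda>z. (C * L * C) * (p (fst z) * indicator {c..d} (snd z))"])
    show "integrable (lborel \<Otimes>\<^sub>M lborel) (\<lambda>z. (C * L * C) * (p (fst z) * indicator {c..d} (snd z)) :: real)"
    proof (intro integrable_mult_right lborel_pair.Fubini_integrable)
      show "(\<lambda>z. p (fst z) * indicator {c..d} (snd z) :: real) \<in> borel_measurable (lborel \<Otimes>\<^sub>M lborel)"
        by measurable
      have "(\<lambda>x. \<integral>y. norm (p (fst (x, y)) * indicator {c..d} (snd (x, y)) :: real) \<partial>lborel) = (\<lambda>x. L * p x)"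
        using p_nn by (auto simp: L_def abs_mult)
      then show "integrable lborel (\<lambda>x. \<integral>y. norm (p (fst (x, y)) * indicator {c..d} (snd (x, y)) :: real) \<partial>lborel)"
        using p_int by simp
      show "AE x in lborel. integrable lborel (\<lambda>y. p (fst (x, y)) * indicator {c..d} (snd (x, y)) :: real)"
        by (intro AE_I2) (simp add: ind_int0)
    qed
    show "case_prod G \<in> borel_measurable (lborel \<Otimes>\<^sub>M lborel)"
      unfolding G_def by measurable
    show "AE z in lborel \<Otimes>\<^sub>M lborel. norm (case_prod G z) \<le> norm ((C * L * C) * (p (fst z) * indicator {c..d} (snd z)) :: real)"
    proof (intro AE_I2)
      fix z :: "real \<times> real"
      obtain x u where z: "z = (x, u)" by fastforce
      have "p x * F x * h x u \<le> p x * (C * L) * (C * indicator {c..d} u)"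
        using p_nn[of x] F_nn[of x] h_nn[of x u] F_le[of x] h_bd[of x u]
        by (intro mult_mono) (auto intro: mult_left_mono)
      then show "norm (case_prod G z) \<le> norm ((C * L * C) * (p (fst z) * indicator {c..d} (snd z)) :: real)"
        unfolding z using p_nn[of x] F_nn[of x] h_nn[of x u] C0 L0
        by (simp add: G_def abs_mult algebra_simps)
    qed
  qed
  have Gx: "(\<integral>u. G x u \<partial>lborel) = p x * (F x)\<^sup>2" for x
  proof -
    have "(\<integral>u. G x u \<partial>lborel) = (p x * F x) * (\<integral>u. h x u \<partial>lborel)"
      unfolding G_def by (rule integral_mult_right_zero)
    then show ?thesis by (simp add: F_def[symmetric] power2_eq_square)
  qed
  have "N = (\<integral>x. (\<integral>u. G x u \<partial>lborel) \<partial>lborel)"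
    unfolding N_def Gx ..
  also have "\<dots> = (\<integral>u. (\<integral>x. G x u \<partial>lborel) \<partial>lborel)"
    by (rule lborel_pair.Fubini_integral[OF G_int, symmetric])
  also have "\<dots> \<le> (\<integral>u. sqrt N * w u \<partial>lborel)"
  proof (rule integral_mono)
    show "integrable lborel (\<lambda>u. \<integral>x. G x u \<partial>lborel)" by (rule lborel_pair.integrable_snd[OF G_int])
    show "integrable lborel (\<lambda>u. sqrt N * w u)" using w_int by simp
    fix u
    have iF: "integrable lborel (\<lambda>x. p x * (F x)\<^sup>2)"
    proof (rule bound_by_p_integrable[OF p_int, where K="(C*L)\<^sup>2"])
      show "(\<lambda>x. p x * (F x)\<^sup>2) \<in> borel_measurable lborel" by measurable
      fix x
      have "(F x)\<^sup>2 \<le> (C*L)\<^sup>2" using F_nn[of x] F_le[of x] by (intro power_mono) auto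
      then show "\<bar>p x * (F x)\<^sup>2\<bar> \<le> (C*L)\<^sup>2 * p x"
        using p_nn[of x] by (simp add: abs_mult mult.commute mult_left_mono)
    qed
    have iG: "integrable lborel (\<lambda>x. p x * F x * h x u)"
    proof (rule bound_by_p_integrable[OF p_int, where K="C * L * C"])
      show "(\<lambda>x. p x * F x * h x u) \<in> borel_measurable lborel" by measurable
      fix x
      have "p x * F x * h x u \<le> p x * (C * L) * C"
        using p_nn[of x] F_nn[of x] h_nn[of x u] F_le[of x] h_le_C[of x u] C0 L0
        by (intro mult_mono) (auto intro: mult_left_mono)
      then show "\<bar>p x * F x * h x u\<bar> \<le> C * L * C * p x"
        using p_nn[of x] F_nn[of x] h_nn[of x u] by (simp add: algebra_simps)
    qed
    have "(\<integral>x. p x * F x * h x u \<partial>lborel) \<le> sqrt N * w u"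
      unfolding N_def w_def by (rule weighted_cs[OF p_nn iF hsq_int iG])
    then show "(\<integral>x. G x u \<partial>lborel) \<le> sqrt N * w u" by (simp add: G_def)
  qed
  also have "\<dots> = sqrt N * W" by (simp add: W_def)
  finally have NW: "N \<le> sqrt N * W" .
  show ?thesis
  proof (cases "N = 0")
    case True then show ?thesis using W0 by (simp add: N_def F_def W_def w_def)
  next
    case False
    then have "sqrt N > 0" using N0 by simp
    moreover have "sqrt N * sqrt N \<le> sqrt N * W" using NW N0 by simp
    ultimately have "sqrt N \<le> W" using mult_le_cancel_left_pos by blast
    then show ?thesis by (simp add: N_def F_def W_def w_def)
  qed
qed


theorem lemma3p4:
  fixes \<pi> :: "real \<Rightarrow> real" and q :: "real \<Rightarrow> real \<Rightarrow> real"
    and s a :: real and f :: "real \<Rightarrow> complex"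
  assumes pi_pos: "\<And>x. \<pi> x > 0"
    and pi_cont: "continuous_on UNIV \<pi>"
    and pi_int: "integrable lborel \<pi>"
    and pi_prob: "(LINT x|lborel. \<pi> x) = 1"
    and q_nonneg: "\<And>x y. q x y \<ge> 0"
    and q_bdd: "\<exists>B. \<forall>x y. q x y \<le> B"
    and q_cont: "continuous_on UNIV (\<lambda>p::real \<times> real. q (fst p) (snd p))"
    and q_int: "\<And>x. integrable lborel (q x)"
    and q_prob: "\<And>x. (LINT y|lborel. q x y) = 1"
    and s_pos: "s > 0"
    and q_supp: "\<And>x u. \<bar>u\<bar> > s \<Longrightarrow> q x (x + u) = 0"
    and a_pos: "a > 0"
    and f_cont: "continuous_on UNIV f"
    and f_bdd: "bounded (range f)"
  shows "L2_norm \<pi> (T_ac a \<pi> q f)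
           \<le> (LBINT u:{-s..s}. sqrt (LBINT x:{x. \<bar>x\<bar> > a}.
                 (cmod (f (x + u)))\<^sup>2 * (mh_t \<pi> q x (x + u))\<^sup>2 * \<pi> x))
       \<and> (LBINT u:{-s..s}. sqrt (LBINT x:{x. \<bar>x\<bar> > a}.
                 (cmod (f (x + u)))\<^sup>2 * (mh_t \<pi> q x (x + u))\<^sup>2 * \<pi> x))
           \<le> beta_a a s \<pi> q * L2_norm \<pi> f"
proof -
  define t where "t = mh_t \<pi> q"
  obtain Bq where Bq: "\<And>x y. q x y \<le> Bq" using q_bdd by blast
  have Bq0: "0 \<le> Bq" using Bq[of 0 0] q_nonneg[of 0 0] by linarith
  obtain Mf where Mf: "\<And>x. cmod (f x) \<le> Mf" using f_bdd unfolding bounded_iff by blast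
  have Mf0: "0 \<le> Mf" using Mf[of 0] norm_ge_zero[of "f 0"] by linarith
  have t_nn: "0 \<le> t x y" for x y
    using q_nonneg[of x y] q_nonneg[of y x] pi_pos[of x] pi_pos[of y]
    by (simp add: t_def mh_t_def)
  have t_le: "t x y \<le> Bq" for x y
    using Bq[of x y] by (simp add: t_def mh_t_def min_le_iff_disj)
  have t_sym: "t x y * \<pi> x = t y x * \<pi> y" for x y
    using pi_pos[of x] pi_pos[of y] by (auto simp: t_def mh_t_def min_def field_simps)
  have t_zero: "t x (x + u) = 0" if "s < \<bar>u\<bar>" for x u
    using q_supp[OF that, of x] q_nonneg[of "x+u" x] pi_pos[of x] pi_pos[of "x+u"]
    by (simp add: t_def mh_t_def)
  have q_c: "continuous_on S (\<lambda>z. q (g z) (k z))"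
    if "continuous_on S g" "continuous_on S k" for S :: "'z::topological_space set" and g k
    using continuous_on_compose2[OF q_cont continuous_on_Pair[OF that]] by simp
  have pi_c: "continuous_on S (\<lambda>z. \<pi> (g z))"
    if "continuous_on S g" for S :: "'z::topological_space set" and g
    using continuous_on_compose2[OF pi_cont that] by simp
  have f_c: "continuous_on S (\<lambda>z. f (g z))"
    if "continuous_on S g" for S :: "'z::topological_space set" and g
    using continuous_on_compose2[OF f_cont that] by simp
  have t_c: "continuous_on S (\<lambda>z. t (g z) (k z))"
    if "continuous_on S g" "continuous_on S k" for S :: "'z::topological_space set" and g k
    unfolding t_def mh_t_def
    using that pi_pos
    by (intro continuous_intros q_c pi_c) (auto simp: less_imp_neq[symmetric])
  have f_m[measurable]: "f \<in> borel_measurable borel"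
    by (rule borel_measurable_continuous_onI[OF f_cont])
  have pi_m[measurable]: "\<pi> \<in> borel_measurable borel"
    by (rule borel_measurable_continuous_onI[OF pi_cont])
  have t_m2: "(\<lambda>z::real\<times>real. t (fst z) (snd z)) \<in> borel_measurable borel"
    by (intro borel_measurable_continuous_onI t_c continuous_intros)
  have t_m[measurable (raw)]: "(\<lambda>z. t (g z) (k z)) \<in> borel_measurable M"
    if "g \<in> borel_measurable M" "k \<in> borel_measurable M" for M :: "'b measure" and g k
    using measurable_compose[OF measurable_Pair[OF that] t_m2[folded borel_prod]] by simp
  define A where "A = {x::real. a < \<bar>x\<bar>}"
  have A_open: "open A" unfolding A_def
    by (intro open_Collect_less continuous_intros)
  have A_m[measurable]: "A \<in> sets borel" using A_open by simp
  define h where "h x u = indicator A x * indicator {-s..s} u * (cmod (f (x+u)) * t x (x+u))" for x u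
  have h_meas: "(\<lambda>z. h (fst z) (snd z)) \<in> borel_measurable (lborel \<Otimes>\<^sub>M lborel)"
    unfolding h_def by measurable
  have h_m[measurable (raw)]: "(\<lambda>z. h (g z) (k z)) \<in> borel_measurable M"
    if "g \<in> measurable M lborel" "k \<in> measurable M lborel" for M :: "'b measure" and g k
    using measurable_compose[OF measurable_Pair[OF that] h_meas] by simp
  have hx_m: "(\<lambda>u. h x u) \<in> borel_measurable lborel" for x by measurable
  have h_nn: "0 \<le> h x u" for x u unfolding h_def using t_nn by simp
  have h_bd: "h x u \<le> (Mf * Bq) * indicator {-s..s} u" for x u
  proof -
    have "cmod (f (x+u)) * t x (x+u) \<le> Mf * Bq" using Mf t_le t_nn Mf0 by (intro mult_mono) auto
    then show ?thesis unfolding h_def using Mf0 Bq0 t_nn[of x "x+u"]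
      by (auto simp: indicator_def)
  qed
  have Tbound: "cmod (T_ac a \<pi> q f x) \<le> (\<integral>u. h x u \<partial>lborel)" for x
  proof (cases "x \<in> A")
    case True
    then have "x \<in> UNIV - {-a..a}" by (auto simp: A_def)
    then have "T_ac a \<pi> q f x = T_op \<pi> q f x" by (simp add: T_ac_def)
    also have "cmod (T_op \<pi> q f x) \<le> (\<integral>y. norm (f y * complex_of_real (t x y)) \<partial>lborel)"
      unfolding T_op_def t_def by (rule integral_norm_bound)
    also have "\<dots> = (\<integral>y. cmod (f y) * t x y \<partial>lborel)"
      using t_nn by (simp add: norm_mult)
    also have "\<dots> = (\<integral>u. cmod (f (x + u)) * t x (x + u) \<partial>lborel)"
      using lborel_integral_real_affine[where c=1 and t=x and f="\<lambda>y. cmod (f y) * t x y"] by simp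
    also have "\<dots> = (\<integral>u. h x u \<partial>lborel)"
    proof (rule Bochner_Integration.integral_cong[OF refl])
      fix u
      show "cmod (f (x + u)) * t x (x + u) = h x u"
      proof (cases "u \<in> {-s..s}")
        case False
        then have "s < \<bar>u\<bar>" by auto
        then show ?thesis using True False by (simp add: h_def t_zero)
      qed (use True in \<open>simp add: h_def\<close>)
    qed
    finally show ?thesis .
  next
    case False
    then have "x \<notin> UNIV - {-a..a}" by (auto simp: A_def)
    then have "T_ac a \<pi> q f x = 0" by (simp add: T_ac_def)
    then show ?thesis using h_nn by (simp add: integral_nonneg_AE)
  qed
  have h_m1[measurable]: "(\<lambda>x. \<integral>u. h x u \<partial>lborel) \<in> borel_measurable lborel"
    using h_meas by (intro lborel.borel_measurable_lebesgue_integral) (simp add: case_prod_unfold)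
  have hint_le: "(\<integral>u. h x u \<partial>lborel) \<le> Mf * Bq * (2 * s)" for x
  proof -
    have ii: "integrable lborel (indicator {-s..s} :: real \<Rightarrow> real)"
      by (rule integrable_real_indicator) (auto simp: emeasure_lborel_Icc_eq)
    have hi: "integrable lborel (h x)"
      by (rule Bochner_Integration.integrable_bound[where f="\<lambda>u. (Mf*Bq) * indicator {-s..s} u"])
         (use ii h_nn hx_m in \<open>auto intro!: AE_I2 order_trans[OF h_bd abs_ge_self]\<close>)
    have "(\<integral>u. h x u \<partial>lborel) \<le> (\<integral>u. (Mf * Bq) * indicator {-s..s} u \<partial>lborel)"
      by (intro integral_mono hi h_bd) (use ii in simp)
    also have "\<dots> = Mf * Bq * (2 * s)" using s_pos by simp
    finally show ?thesis .
  qed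
  have ineq1: "L2_norm \<pi> (T_ac a \<pi> q f) \<le> (\<integral>u. sqrt (\<integral>x. \<pi> x * (h x u)\<^sup>2 \<partial>lborel) \<partial>lborel)"
  proof -
    have "(\<integral>x. (cmod (T_ac a \<pi> q f x))\<^sup>2 * \<pi> x \<partial>lborel) \<le> (\<integral>x. \<pi> x * (\<integral>u. h x u \<partial>lborel)\<^sup>2 \<partial>lborel)"
    proof (cases "integrable lborel (\<lambda>x. (cmod (T_ac a \<pi> q f x))\<^sup>2 * \<pi> x)")
      case True
      show ?thesis
      proof (rule integral_mono[OF True])
        show "integrable lborel (\<lambda>x. \<pi> x * (\<integral>u. h x u \<partial>lborel)\<^sup>2)"
        proof (rule bound_by_p_integrable[OF pi_int, where K="(Mf * Bq * (2 * s))\<^sup>2"])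
          show "(\<lambda>x. \<pi> x * (\<integral>u. h x u \<partial>lborel)\<^sup>2) \<in> borel_measurable lborel" by measurable
          fix x
          have "(\<integral>u. h x u \<partial>lborel)\<^sup>2 \<le> (Mf * Bq * (2 * s))\<^sup>2"
            using hint_le[of x] h_nn by (intro power_mono) (auto intro: integral_nonneg_AE)
          then show "\<bar>\<pi> x * (\<integral>u. h x u \<partial>lborel)\<^sup>2\<bar> \<le> (Mf * Bq * (2 * s))\<^sup>2 * \<pi> x"
            using pi_pos[of x] by (simp add: abs_mult mult.commute mult_left_mono)
        qed
        fix x
        have "(cmod (T_ac a \<pi> q f x))\<^sup>2 \<le> (\<integral>u. h x u \<partial>lborel)\<^sup>2"
          using Tbound[of x] by (intro power_mono) auto
        then show "(cmod (T_ac a \<pi> q f x))\<^sup>2 * \<pi> x \<le> \<pi> x * (\<integral>u. h x u \<partial>lborel)\<^sup>2"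
          using pi_pos[of x] by (simp add: mult.commute mult_left_mono)
      qed
    next
      case False
      then show ?thesis using pi_pos
        by (simp add: not_integrable_integral_eq integral_nonneg_AE less_imp_le)
    qed
    then have "L2_norm \<pi> (T_ac a \<pi> q f) \<le> sqrt (\<integral>x. \<pi> x * (\<integral>u. h x u \<partial>lborel)\<^sup>2 \<partial>lborel)"
      unfolding L2_norm_def by (rule real_sqrt_le_mono)
    also have "\<dots> \<le> (\<integral>u. sqrt (\<integral>x. \<pi> x * (h x u)\<^sup>2 \<partial>lborel) \<partial>lborel)"
      by (rule minkowski_int[OF _ pi_int h_nn h_bd _ h_meas])
         (use pi_pos Mf0 Bq0 in \<open>auto intro: less_imp_le\<close>)
    finally show ?thesis .
  qed
  define Gm where "Gm u = sqrt (LBINT x:A. (cmod (f (x + u)))\<^sup>2 * (t x (x + u))\<^sup>2 * \<pi> x)" for u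
  have eq1: "(\<integral>u. sqrt (\<integral>x. \<pi> x * (h x u)\<^sup>2 \<partial>lborel) \<partial>lborel) = (LBINT u:{-s..s}. Gm u)"
    unfolding set_lebesgue_integral_def
  proof (rule Bochner_Integration.integral_cong[OF refl])
    fix u
    show "sqrt (\<integral>x. \<pi> x * (h x u)\<^sup>2 \<partial>lborel) = indicator {-s..s} u *\<^sub>R Gm u"
    proof (cases "u \<in> {-s..s}")
      case True
      have "(\<integral>x. \<pi> x * (h x u)\<^sup>2 \<partial>lborel) = (LBINT x:A. (cmod (f (x + u)))\<^sup>2 * (t x (x + u))\<^sup>2 * \<pi> x)"
        unfolding set_lebesgue_integral_def
        by (rule Bochner_Integration.integral_cong[OF refl])
           (use True in \<open>auto simp: h_def indicator_def power_mult_distrib\<close>)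
      then show ?thesis using True by (simp add: Gm_def)
    next
      case False
      then show ?thesis by (simp add: h_def)
    qed
  qed
  define \<phi> where "\<phi> x u = sqrt (t x (x + u) * t (x + u) x)" for x u
  define S where "S u = (SUP x\<in>A. \<phi> x u)" for u
  have beta_eq: "beta_a a s \<pi> q = (LBINT u:{-s..s}. S u)"
    unfolding beta_a_def S_def \<phi>_def A_def t_def ..
  have \<phi>_nn: "0 \<le> \<phi> x u" for x u unfolding \<phi>_def using t_nn by simp
  have \<phi>_le: "\<phi> x u \<le> Bq" for x u
  proof -
    have "t x (x + u) * t (x + u) x \<le> Bq * Bq" using t_nn t_le Bq0 by (intro mult_mono) auto
    then have "\<phi> x u \<le> sqrt (Bq * Bq)" unfolding \<phi>_def by (rule real_sqrt_le_mono)
    then show ?thesis using Bq0 by simp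
  qed
  have A_ne: "a + 1 \<in> A" using a_pos by (simp add: A_def)
  have bdd: "bdd_above ((\<lambda>x. \<phi> x u) ` A)" for u
    by (rule bdd_aboveI[where M=Bq]) (auto simp: \<phi>_le)
  have S_ge: "\<phi> x u \<le> S u" if "x \<in> A" for x u
    unfolding S_def by (rule cSUP_upper[OF that bdd])
  have S_nn: "0 \<le> S u" for u using S_ge[OF A_ne, of u] \<phi>_nn[of "a+1" u] by linarith
  have S_le: "S u \<le> Bq" for u
    unfolding S_def by (rule cSUP_least) (use A_ne \<phi>_le in auto)
  have S_m[measurable]: "S \<in> borel_measurable lborel"
    unfolding borel_measurable_iff_greater
  proof
    fix c
    have "{w \<in> space lborel. c < S w} = (\<Union>x\<in>A. {w. c < \<phi> x w})"
      using less_cSUP_iff[OF _ bdd] A_ne by (auto simp: S_def)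
    moreover have "open (\<Union>x\<in>A. {w. c < \<phi> x w})"
      unfolding \<phi>_def by (intro open_UN ballI open_Collect_less continuous_intros t_c)
    ultimately show "{w \<in> space lborel. c < S w} \<in> sets lborel" by simp
  qed
  define J where "J = (\<integral>y. (cmod (f y))\<^sup>2 * \<pi> y \<partial>lborel)"
  have Nf: "L2_norm \<pi> f = sqrt J" unfolding L2_norm_def J_def ..
  have J0: "0 \<le> J" unfolding J_def using pi_pos by (intro integral_nonneg_AE AE_I2) (simp add: less_imp_le)
  have Gle: "Gm u \<le> S u * sqrt J" for u
  proof -
    have pis0: "integrable lborel (\<lambda>x. \<pi> (u + x))"
      using lborel_integrable_real_affine_iff[where c=1 and t=u and f=\<pi>] pi_int by simp
    have pis: "integrable lborel (\<lambda>x. \<pi> (x + u))" using pis0 by (simp add: add.commute)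
    have I1: "integrable lborel (\<lambda>x. indicator A x *\<^sub>R ((cmod (f (x + u)))\<^sup>2 * (t x (x + u))\<^sup>2 * \<pi> x))"
    proof (rule bound_by_p_integrable[OF pi_int, where K="Mf\<^sup>2 * Bq\<^sup>2"])
      show "(\<lambda>x. indicator A x *\<^sub>R ((cmod (f (x + u)))\<^sup>2 * (t x (x + u))\<^sup>2 * \<pi> x)) \<in> borel_measurable lborel"
        by measurable
      fix x
      have "(cmod (f (x + u)))\<^sup>2 * (t x (x + u))\<^sup>2 \<le> Mf\<^sup>2 * Bq\<^sup>2"
        using Mf[of "x+u"] t_le[of x "x+u"] t_nn[of x "x+u"]
        by (intro mult_mono power_mono) auto
      then show "\<bar>indicator A x *\<^sub>R ((cmod (f (x + u)))\<^sup>2 * (t x (x + u))\<^sup>2 * \<pi> x)\<bar> \<le> Mf\<^sup>2 * Bq\<^sup>2 * \<pi> x"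
        using pi_pos[of x] by (auto simp: indicator_def abs_mult intro: mult_right_mono less_imp_le)
    qed
    have I2: "integrable lborel (\<lambda>x. (S u)\<^sup>2 * ((cmod (f (x + u)))\<^sup>2 * \<pi> (x + u)))"
    proof -
      have "integrable lborel (\<lambda>x. (cmod (f (x + u)))\<^sup>2 * \<pi> (x + u))"
      proof (rule bound_by_p_integrable[OF pis, where K="Mf\<^sup>2"])
        show "(\<lambda>x. (cmod (f (x + u)))\<^sup>2 * \<pi> (x + u)) \<in> borel_measurable lborel" by measurable
        fix x
        have "(cmod (f (x + u)))\<^sup>2 \<le> Mf\<^sup>2" using Mf[of "x+u"] by (intro power_mono) auto
        then show "\<bar>(cmod (f (x + u)))\<^sup>2 * \<pi> (x + u)\<bar> \<le> Mf\<^sup>2 * \<pi> (x + u)"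
          using pi_pos[of "x+u"] by (simp add: abs_mult mult_right_mono less_imp_le)
      qed
      then show ?thesis by simp
    qed
    have "(LBINT x:A. (cmod (f (x + u)))\<^sup>2 * (t x (x + u))\<^sup>2 * \<pi> x)
        \<le> (\<integral>x. (S u)\<^sup>2 * ((cmod (f (x + u)))\<^sup>2 * \<pi> (x + u)) \<partial>lborel)"
      unfolding set_lebesgue_integral_def
    proof (rule integral_mono[OF I1 I2])
      fix x
      show "indicator A x *\<^sub>R ((cmod (f (x + u)))\<^sup>2 * (t x (x + u))\<^sup>2 * \<pi> x)
          \<le> (S u)\<^sup>2 * ((cmod (f (x + u)))\<^sup>2 * \<pi> (x + u))"
      proof (cases "x \<in> A")
        case True
        have tt: "t x (x + u) * t (x + u) x = (\<phi> x u)\<^sup>2"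
          unfolding \<phi>_def using t_nn[of x "x+u"] t_nn[of "x+u" x] by simp
        have "(t x (x + u))\<^sup>2 * \<pi> x = t x (x + u) * (t x (x + u) * \<pi> x)"
          by (simp add: power2_eq_square mult.assoc)
        also have "\<dots> = t x (x + u) * (t (x + u) x * \<pi> (x + u))" using t_sym[of x "x+u"] by simp
        also have "\<dots> = (t x (x + u) * t (x + u) x) * \<pi> (x + u)" by (simp add: mult.assoc)
        finally have e: "(t x (x + u))\<^sup>2 * \<pi> x = (\<phi> x u)\<^sup>2 * \<pi> (x + u)" using tt by simp
        have "(\<phi> x u)\<^sup>2 \<le> (S u)\<^sup>2" using S_ge[OF True] \<phi>_nn by (intro power_mono) auto
        then have "(\<phi> x u)\<^sup>2 * \<pi> (x + u) \<le> (S u)\<^sup>2 * \<pi> (x + u)"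
          using pi_pos[of "x+u"] by (intro mult_right_mono) auto
        then have "(cmod (f (x + u)))\<^sup>2 * ((t x (x + u))\<^sup>2 * \<pi> x) \<le> (cmod (f (x + u)))\<^sup>2 * ((S u)\<^sup>2 * \<pi> (x + u))"
          unfolding e by (intro mult_left_mono) auto
        then show ?thesis using True by (simp add: ac_simps)
      next
        case False
        then show ?thesis using pi_pos[of "x+u"] by (simp add: less_imp_le)
      qed
    qed
    also have "\<dots> = (S u)\<^sup>2 * J"
    proof -
      have "(\<integral>x. (cmod (f (x + u)))\<^sup>2 * \<pi> (x + u) \<partial>lborel) = J"
        using lborel_integral_real_affine[where c=1 and t=u and f="\<lambda>y. (cmod (f y))\<^sup>2 * \<pi> y"]
        by (simp add: J_def add.commute)
      then show ?thesis by simp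
    qed
    finally have "Gm u \<le> sqrt ((S u)\<^sup>2 * J)" unfolding Gm_def by (rule real_sqrt_le_mono)
    then show ?thesis using S_nn[of u] by (simp add: real_sqrt_mult)
  qed
  have Gm_nn: "0 \<le> Gm u" for u
    unfolding Gm_def set_lebesgue_integral_def
    by (intro real_sqrt_ge_zero integral_nonneg_AE AE_I2)
       (use pi_pos in \<open>simp add: indicator_def less_imp_le\<close>)
  have Gm_m[measurable]: "Gm \<in> borel_measurable lborel"
    unfolding Gm_def[abs_def] set_lebesgue_integral_def by measurable
  have ii: "integrable lborel (indicator {-s..s} :: real \<Rightarrow> real)"
    by (rule integrable_real_indicator) (auto simp: emeasure_lborel_Icc_eq)
  have ineq2: "(LBINT u:{-s..s}. Gm u) \<le> beta_a a s \<pi> q * L2_norm \<pi> f"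
  proof -
    have "(LBINT u:{-s..s}. Gm u) \<le> (LBINT u:{-s..s}. S u * sqrt J)"
    proof (rule set_integral_mono)
      show "set_integrable lborel {-s..s} Gm"
        unfolding set_integrable_def
      proof (rule Bochner_Integration.integrable_bound[where f="\<lambda>u. (Bq * sqrt J) * indicator {-s..s} u"])
        show "integrable lborel (\<lambda>u. (Bq * sqrt J) * indicator {-s..s} u :: real)" using ii by simp
        show "AE u in lborel. norm (indicator {-s..s} u *\<^sub>R Gm u) \<le> norm ((Bq * sqrt J) * indicator {-s..s} u :: real)"
        proof (intro AE_I2)
          fix u
          have "Gm u \<le> Bq * sqrt J"
            using Gle[of u] S_le[of u] J0 by (meson order_trans mult_right_mono real_sqrt_ge_zero)
          then show "norm (indicator {-s..s} u *\<^sub>R Gm u) \<le> norm ((Bq * sqrt J) * indicator {-s..s} u :: real)"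
            using Gm_nn[of u] by (auto simp: indicator_def)
        qed
      qed simp
      show "set_integrable lborel {-s..s} (\<lambda>u. S u * sqrt J)"
        unfolding set_integrable_def
      proof (rule Bochner_Integration.integrable_bound[where f="\<lambda>u. (Bq * sqrt J) * indicator {-s..s} u"])
        show "integrable lborel (\<lambda>u. (Bq * sqrt J) * indicator {-s..s} u :: real)" using ii by simp
        show "AE u in lborel. norm (indicator {-s..s} u *\<^sub>R (S u * sqrt J)) \<le> norm ((Bq * sqrt J) * indicator {-s..s} u :: real)"
        proof (intro AE_I2)
          fix u
          have "S u * sqrt J \<le> Bq * sqrt J"
            using S_le[of u] J0 by (intro mult_right_mono) auto
          then show "norm (indicator {-s..s} u *\<^sub>R (S u * sqrt J)) \<le> norm ((Bq * sqrt J) * indicator {-s..s} u :: real)"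
            using S_nn[of u] J0 by (auto simp: indicator_def)
        qed
      qed simp
      show "Gm u \<le> S u * sqrt J" if "u \<in> {-s..s}" for u by (rule Gle)
    qed
    also have "(LBINT u:{-s..s}. S u * sqrt J) = (LBINT u:{-s..s}. S u) * sqrt J"
      unfolding set_lebesgue_integral_def by (simp add: mult.assoc[symmetric])
    finally show ?thesis by (simp add: beta_eq Nf)
  qed
  have final1: "L2_norm \<pi> (T_ac a \<pi> q f) \<le> (LBINT u:{-s..s}. Gm u)" using ineq1 eq1 by simp
  show ?thesis using final1 ineq2 unfolding Gm_def[abs_def] A_def t_def by simp
qed

end
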